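(* Fix $\epsilon>0$ and define the relation $P$ on $\mathbb R$ by $(x,y)\in P\iff x+\epsilon\geq y$. Let $\chi$ be the indicator function of the open interval $(-1,1)$, let $f(t)=t+(1-t^2)\chi(t)$, and let $\mathcal V=\{v_\alpha:\alpha\in\mathbb R\}$ where $v_\alpha(x)=f\big(\tfrac{x-\alpha}{\epsilon}\big)$. Then each $v_\alpha$ is continuous, $P$ is complete and negatively transitive but not transitive, and for all $x,y\in\mathbb R$: $(x,y)\in P\iff\exists\alpha\in\mathbb R,\ v_\alpha(x)\geq v_\alpha(y)$.
   Context: $P$ is complete if for all $x,y$, $(x,y)\in P$ or $(y,x)\in P$; negatively transitive if $(x,y)\notin P$ and $(y,z)\notin P$ imply $(x,z)\notin P$; transitive if $(x,y),(y,z)\in P$ imply $(x,z)\in P$. *)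

theory Defs
  imports Complex_Main "HOL-Library.Indicator_Function"
begin

definition complete_rel :: "'a rel \<Rightarrow> bool" where
  "complete_rel P \<longleftrightarrow> (\<forall>x y. (x, y) \<in> P \<or> (y, x) \<in> P)"

definition neg_trans :: "'a rel \<Rightarrow> bool" where
  "neg_trans P \<longleftrightarrow> (\<forall>x y z. (x, y) \<notin> P \<longrightarrow> (y, z) \<notin> P \<longrightarrow> (x, z) \<notin> P)"

end

theory Submission
  imports Defs
begin

theorem mainTheorem4:
  fixes \<epsilon> :: real
    and P :: "real rel"
    and \<chi> f :: "real \<Rightarrow> real"
    and v :: "real \<Rightarrow> real \<Rightarrow> real"
  assumes "\<epsilon> > 0"
    and "P = {(x, y). x + \<epsilon> \<ge> y}"
    and "\<chi> = indicator {-1<..<1}"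
    and "\<And>t. f t = t + (1 - t\<^sup>2) * \<chi> t"
    and "\<And>\<alpha> x. v \<alpha> x = f ((x - \<alpha>) / \<epsilon>)"
  shows "(\<forall>\<alpha>. continuous_on UNIV (v \<alpha>))
    \<and> complete_rel P \<and> neg_trans P \<and> \<not> trans P
    \<and> (\<forall>x y. (x, y) \<in> P \<longleftrightarrow> (\<exists>\<alpha>. v \<alpha> x \<ge> v \<alpha> y))"
proof -
  have fm: "f t = t + max 0 (1 - t\<^sup>2)" for t
  proof (cases "t \<in> {-1<..<1}")
    case True
    hence "\<bar>t\<bar> < 1" by auto
    hence "t\<^sup>2 < 1" by (simp add: abs_square_less_1)
    thus ?thesis using True assms(3,4) by simp
  next
    case False
    hence "\<bar>t\<bar> \<ge> 1" by auto
    hence "t\<^sup>2 \<ge> 1" using abs_square_less_1[of t] by linarith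
    thus ?thesis using False assms(3,4) by simp
  qed
  have g: "0 \<le> f t - t \<and> f t - t \<le> 1" for t
  proof -
    have "0 \<le> t\<^sup>2" by simp
    thus ?thesis using fm[of t] by linarith
  qed
  have cont: "continuous_on UNIV (v \<alpha>)" for \<alpha>
  proof -
    have "v \<alpha> = (\<lambda>x. (x - \<alpha>) / \<epsilon> + max 0 (1 - ((x - \<alpha>) / \<epsilon>)\<^sup>2))"
      using assms(5) fm by auto
    thus ?thesis using assms(1) by (auto intro!: continuous_intros continuous_on_max)
  qed
  have key: "(x, y) \<in> P \<longleftrightarrow> (\<exists>\<alpha>. v \<alpha> x \<ge> v \<alpha> y)" for x y
  proof
    assume "(x, y) \<in> P"
    hence le: "y - x \<le> \<epsilon>" using assms(2) by auto
    show "\<exists>\<alpha>. v \<alpha> x \<ge> v \<alpha> y"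
    proof (cases "y \<le> x")
      case True
      define \<alpha> where "\<alpha> = y - 2 * \<epsilon>"
      have "(y - \<alpha>)/\<epsilon> = 2" using assms(1) by (simp add: \<alpha>_def)
      moreover have "(x - \<alpha>)/\<epsilon> \<ge> 2" using assms(1) True by (simp add: \<alpha>_def field_simps)
      moreover have *: "f u = u" if u: "1 \<le> u" for u :: real
      proof -
        have "1 \<le> u\<^sup>2" using u by (simp add: one_le_power)
        thus ?thesis using fm[of u] by simp
      qed
      ultimately show ?thesis using assms(5) by (rule_tac x=\<alpha> in exI) (simp add: * )
    next
      case False
      define \<alpha> where "\<alpha> = y - \<epsilon>"
      define s where "s = (x - \<alpha>)/\<epsilon>"
      have y1: "(y - \<alpha>)/\<epsilon> = 1" using assms(1) by (simp add: \<alpha>_def)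
      have s0: "0 \<le> s" "s < 1" using assms(1) False le by (auto simp: s_def \<alpha>_def field_simps)
      have "f 1 = 1" using fm by simp
      moreover have "f s \<ge> 1"
      proof -
        have "s * s \<le> s" using s0 by (simp add: mult_left_le_one_le)
        thus ?thesis using fm[of s] by (simp add: power2_eq_square)
      qed
      ultimately show ?thesis using assms(5) y1 s_def by (rule_tac x=\<alpha> in exI) simp
    qed
  next
    assume "\<exists>\<alpha>. v \<alpha> x \<ge> v \<alpha> y"
    then obtain \<alpha> where h: "f ((x - \<alpha>)/\<epsilon>) \<ge> f ((y - \<alpha>)/\<epsilon>)" using assms(5) by auto
    have "(y - \<alpha>)/\<epsilon> - (x - \<alpha>)/\<epsilon> \<le> 1"
      using h g[of "(x - \<alpha>)/\<epsilon>"] g[of "(y - \<alpha>)/\<epsilon>"] by linarith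
    hence "(y - x)/\<epsilon> \<le> 1" by (simp add: diff_divide_distrib)
    hence "y - x \<le> \<epsilon>" using assms(1) by (simp add: divide_le_eq)
    thus "(x, y) \<in> P" using assms(2) by auto
  qed
  have "\<not> trans P"
  proof
    assume "trans P"
    moreover have "(0, \<epsilon>) \<in> P" "(\<epsilon>, 2*\<epsilon>) \<in> P" using assms(2) by auto
    ultimately have "(0, 2*\<epsilon>) \<in> P" by (meson transD)
    thus False using assms(1,2) by auto
  qed
  moreover have "complete_rel P" using assms(1,2) by (auto simp: complete_rel_def)
  moreover have "neg_trans P" using assms(1,2) by (auto simp: neg_trans_def)
  ultimately show ?thesis using cont key by blast
qed

end
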